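(* Let $q\in(0,1)$, $\alpha\in(-1,1)$, $\beta<1$ real, $n\in\mathbb{N}_0$, and $0<|z|<1$. Then \[ \sum_{k=n}^{\infty}\frac{1-\beta q^k}{1-\alpha q^k}\bigl(\psi_k^+(z)\bigr)^2=\frac{z^2}{z^2-1}\Bigl[(\psi_{n-1}^+)'(z)\,\psi_n^+(z)-\psi_{n-1}^+(z)\,(\psi_n^+)'(z)\Bigr]. \]
   Context: $(a;q)_n:=\prod_{j=0}^{n-1}(1-aq^j)$, $n\in\mathbb{N}_0\cup\{\infty\}$. For $z\ne0$ and integers $n\ge-1$, \[ \psi_n^+(z):=z^n\sum_{k=0}^\infty\frac{(q^{k+1}z^2;q)_\infty}{(q;q)_k}c_k(z)q^{(n+1)k},\qquad c_k(z):=\prod_{j=0}^{k-1}\bigl(\alpha(1+z^2q^{2j})-\beta q^j(1+z^2)\bigr), \] i.e. $\psi_n^+(z)=z^n(qz^2;q)_\infty\,{}_2\phi_1(z\tau,z\tau^{-1};qz^2;q,\alpha q^{n+1})$ with $\alpha(\tau+\tau^{-1})=\beta(z+z^{-1})$. Primes denote derivatives in $z$. *)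

theory Defs
  imports "HOL-Analysis.Analysis"
begin

definition qpoch :: "complex \<Rightarrow> real \<Rightarrow> nat \<Rightarrow> complex" where
  "qpoch a q n = (\<Prod>j<n. 1 - a * of_real q ^ j)"

definition qpoch_inf :: "complex \<Rightarrow> real \<Rightarrow> complex" where
  "qpoch_inf a q = (\<Prod>j. 1 - a * of_real q ^ j)"

definition cc :: "real \<Rightarrow> real \<Rightarrow> real \<Rightarrow> nat \<Rightarrow> complex \<Rightarrow> complex" where
  "cc q \<alpha> \<beta> k z = (\<Prod>j<k. of_real \<alpha> * (1 + z^2 * of_real q ^ (2*j))
                              - of_real \<beta> * of_real q ^ j * (1 + z^2))"

text \<open>psi_n^+(z) for integers n \<ge> -1 (the index is an int; only n \<ge> -1 is used).\<close>
definition psi :: "real \<Rightarrow> real \<Rightarrow> real \<Rightarrow> int \<Rightarrow> complex \<Rightarrow> complex" where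
  "psi q \<alpha> \<beta> n z = z powi n *
     (\<Sum>k. qpoch_inf (of_real q ^ (k+1) * z^2) q / qpoch (of_real q) q k
            * cc q \<alpha> \<beta> k z * of_real q ^ (nat (n+1) * k))"

end

theory Submission imports Defs "HOL-Complex_Analysis.Complex_Analysis" begin

lemma qp_conv:
  assumes "0 < q" "q < 1"
  shows "convergent_prod (\<lambda>j. 1 - a * of_real q ^ j :: complex)"
proof -
  have "summable (\<lambda>j. norm a * q ^ j)"
    using assms by (intro summable_mult summable_geometric) auto
  hence "summable (\<lambda>j. norm ((1 - a * of_real q ^ j) - 1))"
    using assms by (simp add: norm_mult norm_power)
  thus ?thesis
    by (intro abs_convergent_prod_imp_convergent_prod summable_imp_abs_convergent_prod)
qed

lemma qp_lim:
  assumes "0 < q" "q < 1"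
  shows "(\<lambda>n. \<Prod>j<n. 1 - a * of_real q ^ j) \<longlonglongrightarrow> qpoch_inf a q"
proof -
  have "(\<lambda>n. \<Prod>j\<le>n. 1 - a * of_real q ^ j) \<longlonglongrightarrow> qpoch_inf a q"
    unfolding qpoch_inf_def by (rule convergent_prod_LIMSEQ[OF qp_conv[OF assms]])
  hence "(\<lambda>n. \<Prod>j<Suc n. 1 - a * of_real q ^ j) \<longlonglongrightarrow> qpoch_inf a q"
    by (simp add: lessThan_Suc_atMost)
  thus ?thesis by (rule LIMSEQ_imp_Suc)
qed

lemma qp_partial_bound:
  assumes "0 < q" "q < 1"
  shows "norm (\<Prod>j<n. 1 - a * of_real q ^ j :: complex) \<le> exp (norm a / (1 - q))"
proof -
  have "norm (\<Prod>j<n. 1 - a * of_real q ^ j) = (\<Prod>j<n. norm (1 - a * of_real q ^ j))"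
    by (simp add: prod_norm)
  also have "\<dots> \<le> (\<Prod>j<n. 1 + norm a * q ^ j)"
    apply (intro prod_mono conjI norm_ge_zero)
    using norm_triangle_ineq4[of 1 "a * of_real q ^ _"] assms
    by (simp add: norm_mult norm_power)
  also have "\<dots> \<le> exp (\<Sum>j<n. norm a * q ^ j)"
    by (rule prod_le_exp_sum) (use assms in auto)
  also have "(\<Sum>j<n. norm a * q ^ j) \<le> (\<Sum>j. norm a * q ^ j)"
    by (rule sum_le_suminf) (use assms in \<open>auto intro!: summable_mult summable_geometric\<close>)
  also have "(\<Sum>j. norm a * q ^ j) = norm a / (1 - q)"
    using assms by (simp add: suminf_mult suminf_geometric)
  finally show ?thesis by simp
qed

lemma qp_bound:
  assumes "0 < q" "q < 1"
  shows "norm (qpoch_inf a q) \<le> exp (norm a / (1 - q))"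
proof -
  have "(\<lambda>n. norm (\<Prod>j<n. 1 - a * of_real q ^ j)) \<longlonglongrightarrow> norm (qpoch_inf a q)"
    by (intro tendsto_norm qp_lim assms)
  thus ?thesis
    by (rule LIMSEQ_le_const2) (use qp_partial_bound[OF assms] in auto)
qed

lemma qp_shift:
  assumes "0 < q" "q < 1" "a \<noteq> 1"
  shows "qpoch_inf a q = (1 - a) * qpoch_inf (a * of_real q) q"
proof -
  have "(\<Prod>n. (\<lambda>j. 1 - a * of_real q ^ j) (Suc n)) = qpoch_inf a q / (1 - a)"
    unfolding qpoch_inf_def
    using prodinf_split_head[OF qp_conv[OF assms(1,2)], of a] assms by simp
  moreover have "(\<lambda>n. (\<lambda>j. 1 - a * of_real q ^ j) (Suc n)) = (\<lambda>n. 1 - (a * of_real q) * of_real q ^ n)"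
    by (auto simp: mult_ac)
  ultimately show ?thesis using assms
    by (auto simp: qpoch_inf_def field_simps)
qed

lemma qp_holo:
  assumes "0 < q" "q < 1"
  shows "(\<lambda>u. qpoch_inf u q) holomorphic_on UNIV"
proof (rule holomorphic_uniform_sequence[where f = "\<lambda>n u. \<Prod>j<n. 1 - u * of_real q ^ j"])
  fix x :: complex
  have "uniformly_convergent_on (cball x 1) (\<lambda>N u. \<Prod>j<N. 1 - u * of_real q ^ j)"
  proof (rule uniformly_convergent_on_prod')
    show "uniformly_convergent_on (cball x 1) (\<lambda>N u. \<Sum>n<N. norm ((1 - u * of_real q ^ n) - 1))"
    proof (rule Weierstrass_m_test'[where M = "\<lambda>n. (norm x + 1) * q ^ n"])
      fix n u assume "u \<in> cball x 1"
      hence "norm u \<le> norm x + 1"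
        by (metis dist_norm mem_cball norm_triangle_ineq2 add.commute diff_le_eq order_trans norm_minus_commute)
      thus "norm (norm ((1 - u * of_real q ^ n) - 1)) \<le> (norm x + 1) * q ^ n"
        using assms by (simp add: norm_mult norm_power mult_right_mono)
    next
      show "summable (\<lambda>n. (norm x + 1) * q ^ n)"
        using assms by (intro summable_mult summable_geometric) auto
    qed
  next
    show "compact (cball x 1)" by simp
  next
    fix n show "continuous_on (cball x 1) (\<lambda>u. 1 - u * of_real q ^ n)"
      by (intro continuous_intros)
  qed
  then obtain g where g: "uniform_limit (cball x 1) (\<lambda>N u. \<Prod>j<N. 1 - u * of_real q ^ j) g sequentially"
    unfolding uniformly_convergent_on_def by blast
  have eq: "g u = qpoch_inf u q" if u: "u \<in> cball x 1" for u
  proof -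
    have "(\<lambda>n. \<Prod>j<n. 1 - u * of_real q ^ j) \<longlonglongrightarrow> g u"
      by (rule tendsto_uniform_limitI[OF g u])
    moreover have "(\<lambda>n. \<Prod>j<n. 1 - u * of_real q ^ j) \<longlonglongrightarrow> qpoch_inf u q"
      by (rule qp_lim[OF assms])
    ultimately show ?thesis
      by (rule LIMSEQ_unique)
  qed
  have "uniform_limit (cball x 1) (\<lambda>N u. \<Prod>j<N. 1 - u * of_real q ^ j) (\<lambda>u. qpoch_inf u q) sequentially"
    using g uniform_limit_cong'[of "cball x 1" "\<lambda>N u. \<Prod>j<N. 1 - u * of_real q ^ j" "\<lambda>N u. \<Prod>j<N. 1 - u * of_real q ^ j" g "\<lambda>u. qpoch_inf u q" sequentially] eq
    by blast
  thus "\<exists>d>0. cball x d \<subseteq> UNIV \<and> uniform_limit (cball x d) (\<lambda>n u. \<Prod>j<n. 1 - u * of_real q ^ j) (\<lambda>u. qpoch_inf u q) sequentially"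
    by (intro exI[of _ 1]) auto
next
  fix n show "(\<lambda>u. \<Prod>j<n. 1 - u * of_real q ^ j) holomorphic_on UNIV"
    by (intro holomorphic_intros)
qed simp


definition TT :: "real \<Rightarrow> real \<Rightarrow> real \<Rightarrow> nat \<Rightarrow> complex \<Rightarrow> complex" where
  "TT q a b k w = qpoch_inf (of_real q ^ (k+1) * w^2) q / qpoch (of_real q) q k * cc q a b k w"

definition FF :: "real \<Rightarrow> real \<Rightarrow> real \<Rightarrow> complex \<Rightarrow> complex \<Rightarrow> complex" where
  "FF q a b t w = (\<Sum>k. TT q a b k w * t ^ k)"

definition ee :: "real \<Rightarrow> real \<Rightarrow> real \<Rightarrow> nat \<Rightarrow> real" where
  "ee q a b k = exp (1 / (1 - q)) * (\<Prod>j<k. (\<bar>a\<bar> + (\<bar>a\<bar> + 2 * \<bar>b\<bar>) * q ^ j) / (1 - q ^ (j+1)))"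

context
  fixes q a b :: real
  assumes q0: "0 < q" and q1: "q < 1" and a1: "\<bar>a\<bar> < 1"
begin

lemma qqj: "q * q ^ j < 1"
proof -
  have "q ^ j \<le> 1" using q0 q1 by (intro power_le_one) auto
  hence "q * q ^ j \<le> q" using mult_left_mono[of "q^j" 1 q] q0 by simp
  thus ?thesis using q1 by simp
qed

lemma ee_nonneg: "ee q a b k \<ge> 0"
  unfolding ee_def using q0 q1 qqj
  by (intro mult_nonneg_nonneg prod_nonneg divide_nonneg_nonneg add_nonneg_nonneg)
     (auto simp: less_imp_le)

lemma ee_summable: "summable (ee q a b)"
proof -
  define M where "M = \<bar>a\<bar> + 2 * \<bar>b\<bar>"
  define r where "r k = (\<bar>a\<bar> + M * q ^ k) / (1 - q ^ (k+1))" for k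
  have qk: "(\<lambda>k. q ^ k) \<longlonglongrightarrow> 0"
    using q0 q1 by (intro LIMSEQ_realpow_zero) auto
  have "(\<lambda>k. q * q ^ k) \<longlonglongrightarrow> q * 0"
    by (intro tendsto_mult tendsto_const qk)
  hence "r \<longlonglongrightarrow> (\<bar>a\<bar> + M * 0) / (1 - 0)"
    unfolding r_def using qk q0 q1 by (intro tendsto_intros) auto
  hence "r \<longlonglongrightarrow> \<bar>a\<bar>" by simp
  moreover have "\<bar>a\<bar> < (1 + \<bar>a\<bar>) / 2" using a1 by simp
  ultimately have "eventually (\<lambda>k. r k < (1 + \<bar>a\<bar>) / 2) sequentially"
    by (rule order_tendstoD)
  then obtain N where N: "\<And>k. k \<ge> N \<Longrightarrow> r k < (1 + \<bar>a\<bar>) / 2"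
    by (auto simp: eventually_sequentially)
  have ee_Suc: "ee q a b (Suc k) = ee q a b k * r k" for k
    unfolding ee_def r_def M_def by (simp add: mult_ac)
  have rpos: "r k \<ge> 0" for k
    unfolding r_def M_def using q0 q1 qqj
    by (intro divide_nonneg_nonneg add_nonneg_nonneg mult_nonneg_nonneg)
       (auto simp: less_imp_le)
  show ?thesis
  proof (rule summable_ratio_test[of "(1 + \<bar>a\<bar>) / 2" N])
    show "(1 + \<bar>a\<bar>) / 2 < 1" using a1 by simp
  next
    fix n assume "n \<ge> N"
    hence "r n \<le> (1 + \<bar>a\<bar>) / 2" using N by (simp add: less_imp_le)
    hence "ee q a b n * r n \<le> ee q a b n * ((1 + \<bar>a\<bar>) / 2)"
      by (rule mult_left_mono) (rule ee_nonneg)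
    thus "norm (ee q a b (Suc n)) \<le> (1 + \<bar>a\<bar>) / 2 * norm (ee q a b n)"
      using ee_nonneg[of n] ee_nonneg[of "Suc n"]
      by (simp add: ee_Suc mult.commute)
  qed
qed

lemma qpoch_q: "qpoch (of_real q) q k = of_real (\<Prod>j<k. 1 - q ^ (j+1))"
  unfolding qpoch_def by simp

lemma qpoch_q_pos: "(\<Prod>j<k. 1 - q ^ (j+1)) > 0"
  using qqj by (intro prod_pos) auto

lemma qpoch_q_nz: "qpoch (of_real q) q k \<noteq> 0"
  by (metis qpoch_q qpoch_q_pos of_real_eq_0_iff less_irrefl)

lemma cc_bound:
  assumes w: "norm w \<le> 1"
  shows "norm (cc q a b k w) \<le> (\<Prod>j<k. \<bar>a\<bar> + (\<bar>a\<bar> + 2 * \<bar>b\<bar>) * q ^ j)"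
  unfolding cc_def prod_norm[symmetric]
proof (intro prod_mono conjI norm_ge_zero)
  fix j assume "j \<in> {..<k}"
  have qj: "q ^ j \<le> 1" "0 \<le> q ^ j" using q0 q1 by (auto intro: power_le_one)
  have q2j: "q ^ (2*j) \<le> q ^ j" using q0 q1 by (intro power_decreasing) auto
  have w2: "norm (w^2) \<le> 1" using w by (simp add: norm_power power_le_one)
  have "norm (of_real a * (1 + w^2 * of_real q ^ (2*j)) - of_real b * of_real q ^ j * (1 + w^2))
        \<le> norm (of_real a * (1 + w^2 * of_real q ^ (2*j))) + norm (of_real b * of_real q ^ j * (1 + w^2))"
    by (rule norm_triangle_ineq4)
  also have "norm (of_real a * (1 + w^2 * of_real q ^ (2*j))) \<le> \<bar>a\<bar> * (1 + q ^ j)"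
  proof -
    have "norm (1 + w^2 * of_real q ^ (2*j)) \<le> 1 + norm (w^2) * q ^ (2*j)"
      using norm_triangle_ineq[of 1 "w^2 * of_real q ^ (2*j)"] q0 by (simp add: norm_mult norm_power)
    also have "\<dots> \<le> 1 + q ^ j"
      using w2 q2j q0 mult_mono[OF w2 q2j] by simp
    finally show ?thesis by (simp add: norm_mult mult_left_mono)
  qed
  also have "norm (of_real b * of_real q ^ j * (1 + w^2)) \<le> \<bar>b\<bar> * q ^ j * 2"
  proof -
    have "norm (1 + w^2) \<le> 2"
      using norm_triangle_ineq[of 1 "w^2"] w2 by simp
    thus ?thesis using q0 by (simp add: norm_mult norm_power mult_left_mono)
  qed
  finally show "norm (of_real a * (1 + w^2 * of_real q ^ (2*j)) - of_real b * of_real q ^ j * (1 + w^2))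
        \<le> \<bar>a\<bar> + (\<bar>a\<bar> + 2 * \<bar>b\<bar>) * q ^ j"
    by (simp add: algebra_simps)
qed

lemma TT_bound:
  assumes w: "norm w \<le> 1"
  shows "norm (TT q a b k w) \<le> ee q a b k"
proof -
  have n1: "norm (of_real q ^ (k+1) * w^2) \<le> 1"
    using w q0 q1 by (simp add: norm_mult norm_power mult_le_one power_le_one)
  have A: "norm (qpoch_inf (of_real q ^ (k+1) * w^2) q) \<le> exp (1 / (1 - q))"
    using qp_bound[OF q0 q1, of "of_real q ^ (k+1) * w^2"] n1 q1
    by (meson divide_right_mono exp_le_cancel_iff order_trans diff_gt_0_iff_gt less_imp_le)
  define P where "P = (\<Prod>j<k. 1 - q ^ (j+1))"
  have P: "P > 0" unfolding P_def by (rule qpoch_q_pos)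
  have "norm (TT q a b k w) = norm (qpoch_inf (of_real q ^ (k+1) * w^2) q) * norm (cc q a b k w) / P"
    unfolding TT_def qpoch_q P_def[symmetric] using P by (simp only: norm_mult norm_divide norm_of_real abs_of_pos) simp
  also have "\<dots> \<le> exp (1 / (1 - q)) * (\<Prod>j<k. \<bar>a\<bar> + (\<bar>a\<bar> + 2 * \<bar>b\<bar>) * q ^ j) / P"
    using P A cc_bound[OF w, of k]
    by (intro divide_right_mono mult_mono) auto
  also have "\<dots> = ee q a b k"
    unfolding ee_def P_def by (simp add: prod_dividef)
  finally show ?thesis .
qed

lemma TT_holo: "TT q a b k holomorphic_on UNIV"
proof -
  have "((\<lambda>u. qpoch_inf u q) \<circ> (\<lambda>w. of_real q ^ (k+1) * w^2)) holomorphic_on UNIV"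
    by (rule holomorphic_on_compose[OF _ holomorphic_on_subset[OF qp_holo[OF q0 q1]]])
       (auto intro!: holomorphic_intros)
  hence "(\<lambda>w. qpoch_inf (of_real q ^ (k+1) * w^2) q) holomorphic_on UNIV"
    by (simp add: o_def)
  moreover have "qpoch (of_real q) q k \<noteq> 0"
    by (rule qpoch_q_nz)
  ultimately show ?thesis
    unfolding TT_def cc_def by (intro holomorphic_intros) auto
qed

lemma FF_sums:
  assumes w: "norm w \<le> 1" and t: "norm t \<le> 1"
  shows "(\<lambda>k. TT q a b k w * t ^ k) sums FF q a b t w"
proof -
  have "summable (\<lambda>k. TT q a b k w * t ^ k)"
  proof (rule summable_comparison_test'[OF ee_summable])
    fix k :: nat
    have "norm (TT q a b k w * t ^ k) \<le> ee q a b k * 1"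
      unfolding norm_mult norm_power
      by (intro mult_mono TT_bound w power_le_one t ee_nonneg) auto
    thus "norm (TT q a b k w * t ^ k) \<le> ee q a b k" by simp
  qed
  thus ?thesis unfolding FF_def by (simp add: summable_sums)
qed

lemma FF_bound:
  assumes w: "norm w \<le> 1" and t: "norm t \<le> 1"
  shows "norm (FF q a b t w) \<le> suminf (ee q a b)"
proof -
  have le: "norm (TT q a b k w * t ^ k) \<le> ee q a b k" for k
  proof -
    have "norm (TT q a b k w * t ^ k) \<le> ee q a b k * 1"
      unfolding norm_mult norm_power
      by (intro mult_mono TT_bound w power_le_one t ee_nonneg) auto
    thus ?thesis by simp
  qed
  have "summable (\<lambda>k. norm (TT q a b k w * t ^ k))"
    by (rule summable_comparison_test'[OF ee_summable]) (use le in auto)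
  hence "norm (FF q a b t w) \<le> (\<Sum>k. norm (TT q a b k w * t ^ k))"
    unfolding FF_def by (rule summable_norm)
  also have "\<dots> \<le> suminf (ee q a b)"
    by (rule suminf_le[OF le]) (fact, rule ee_summable)
  finally show ?thesis .
qed

lemma FF_ulim:
  assumes t: "norm t \<le> 1"
  shows "uniform_limit (cball 0 1) (\<lambda>n w. \<Sum>k<n. TT q a b k w * t ^ k) (FF q a b t) sequentially"
  unfolding FF_def
proof (rule Weierstrass_m_test[OF _ ee_summable])
  fix k :: nat and w :: complex assume "w \<in> cball 0 1"
  hence w: "norm w \<le> 1" by simp
  have "norm (TT q a b k w * t ^ k) \<le> ee q a b k * 1"
    unfolding norm_mult norm_power
    by (intro mult_mono TT_bound w power_le_one t ee_nonneg) auto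
  thus "norm (TT q a b k w * t ^ k) \<le> ee q a b k" by simp
qed

lemma FF_holo:
  assumes t: "norm t \<le> 1"
  shows "FF q a b t holomorphic_on ball 0 1"
proof (rule holomorphic_uniform_sequence[where f = "\<lambda>n w. \<Sum>k<n. TT q a b k w * t ^ k"])
  fix n show "(\<lambda>w. \<Sum>k<n. TT q a b k w * t ^ k) holomorphic_on ball 0 1"
    by (intro holomorphic_intros holomorphic_on_subset[OF TT_holo]) auto
next
  fix x :: complex assume x: "x \<in> ball 0 1"
  define d where "d = (1 - norm x) / 2"
  have d: "d > 0" using x by (simp add: d_def)
  have sub: "cball x d \<subseteq> ball 0 1"
  proof
    fix y assume "y \<in> cball x d"
    hence "norm (y - x) \<le> d" by (simp add: dist_norm norm_minus_commute)
    hence "norm y \<le> norm x + d" using norm_triangle_ineq2[of y x] by simp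
    moreover have "norm x < 1" using x by simp
    ultimately have "norm y < 1" unfolding d_def by (simp add: field_simps)
    thus "y \<in> ball 0 1" by simp
  qed
  have "uniform_limit (cball x d) (\<lambda>n w. \<Sum>k<n. TT q a b k w * t ^ k) (FF q a b t) sequentially"
    by (rule uniform_limit_on_subset[OF FF_ulim[OF t]]) (use sub in auto)
  thus "\<exists>d>0. cball x d \<subseteq> ball 0 1 \<and> uniform_limit (cball x d) (\<lambda>n w. \<Sum>k<n. TT q a b k w * t ^ k) (FF q a b t) sequentially"
    using d sub by blast
qed simp

end


definition xx :: "real \<Rightarrow> real \<Rightarrow> real \<Rightarrow> nat \<Rightarrow> complex \<Rightarrow> complex" where
  "xx q a b k w = of_real a * (1 + w^2 * of_real q ^ (2*k)) - of_real b * of_real q ^ k * (1 + w^2)"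

context
  fixes q a b :: real
  assumes q0: "0 < q" and q1: "q < 1" and a1: "\<bar>a\<bar> < 1"
begin

lemma TT_rec:
  assumes w: "norm w \<le> 1"
  shows "TT q a b (Suc k) w * (1 - of_real q ^ (k+1)) * (1 - of_real q ^ (k+1) * w^2) = xx q a b k w * TT q a b k w"
proof -
  define Q where "Q = (of_real q :: complex)"
  have qk: "q ^ (k+1) < 1" using qqj[OF q0 q1 a1, of k] by simp
  have nz1: "1 - Q ^ (k+1) \<noteq> 0"
  proof
    assume "1 - Q ^ (k+1) = 0"
    hence "of_real (q ^ (k+1)) = (1 :: complex)" by (simp add: Q_def)
    hence "q ^ (k+1) = 1" using of_real_eq_1_iff by blast
    thus False using qk by simp
  qed
  have nz2: "Q ^ (k+1) * w^2 \<noteq> 1"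
  proof
    assume "Q ^ (k+1) * w^2 = 1"
    hence "norm (Q ^ (k+1) * w^2) = 1" by simp
    moreover have "norm (Q ^ (k+1) * w^2) \<le> q ^ (k+1) * 1"
      unfolding Q_def norm_mult norm_power using q0 w
      by (intro mult_mono) (auto simp: power_le_one)
    ultimately show False using qk by simp
  qed
  have sh: "qpoch_inf (Q ^ (k+1) * w^2) q = (1 - Q ^ (k+1) * w^2) * qpoch_inf (Q ^ (Suc k+1) * w^2) q"
    using qp_shift[OF q0 q1 nz2] by (simp add: Q_def mult_ac)
  have qs: "qpoch Q q (Suc k) = qpoch Q q k * (1 - Q ^ (k+1))"
    unfolding qpoch_def Q_def by (simp add: mult_ac)
  have cs: "cc q a b (Suc k) w = cc q a b k w * xx q a b k w"
    unfolding cc_def xx_def by simp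
  have nz3: "qpoch Q q k \<noteq> 0" unfolding Q_def by (rule qpoch_q_nz[OF q0 q1 a1])
  show ?thesis
    unfolding TT_def Q_def[symmetric] sh qs cs
    using nz1 nz3 by (simp add: field_simps Q_def)
qed

lemma FF_rec:
  assumes w: "norm w \<le> 1" and t: "norm t \<le> 1"
  defines "Q \<equiv> (of_real q :: complex)"
  shows "FF q a b t w - (1 + w^2) * FF q a b (Q * t) w + w^2 * FF q a b (Q^2 * t) w
       = t * (of_real a * FF q a b t w + of_real a * w^2 * FF q a b (Q^2 * t) w
              - of_real b * (1 + w^2) * FF q a b (Q * t) w)"
proof -
  have nQ: "norm Q \<le> 1" using q0 q1 by (simp add: Q_def)
  have t1: "norm (Q * t) \<le> 1" using nQ t by (simp add: norm_mult mult_le_one)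
  have t2: "norm (Q^2 * t) \<le> 1" using nQ t by (simp add: norm_mult norm_power mult_le_one power_le_one)
  note s0 = FF_sums[OF q0 q1 a1 w t] and s1 = FF_sums[OF q0 q1 a1 w t1] and s2 = FF_sums[OF q0 q1 a1 w t2]
  have sq: "(Q^2 * t)^k = Q^k * Q^k * t^k" for k by (simp add: power_mult_distrib power2_eq_square)
  have sq3: "(Q^2)^k = Q^k * Q^k" for k by (simp add: power2_eq_square power_mult_distrib)
  have sq4: "Q^(k*2) = Q^k * Q^k" for k by (simp add: power_mult power_mult_distrib power2_eq_square mult.commute[of k 2])
  have sq1: "(Q * t)^k = Q^k * t^k" for k by (simp add: power_mult_distrib)
  have sq2: "Q^(2*k) = Q^k * Q^k" for k by (simp add: power_mult power_mult_distrib power2_eq_square)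
  define u where "u k = TT q a b k w * t ^ k" for k
  define g where "g k = u k * ((1 - Q^k) * (1 - w^2 * Q^k))" for k
  have "(\<lambda>k. u k - (1 + w^2) * (TT q a b k w * (Q * t) ^ k) + w^2 * (TT q a b k w * (Q^2 * t) ^ k))
          sums (FF q a b t w - (1 + w^2) * FF q a b (Q * t) w + w^2 * FF q a b (Q^2 * t) w)"
    unfolding u_def by (intro sums_add sums_diff sums_mult s0 s1 s2)
  also have "(\<lambda>k. u k - (1 + w^2) * (TT q a b k w * (Q * t) ^ k) + w^2 * (TT q a b k w * (Q^2 * t) ^ k)) = g"
    by (rule ext) (simp add: g_def u_def sq sq1 sq3 algebra_simps)
  finally have S1: "g sums (FF q a b t w - (1 + w^2) * FF q a b (Q * t) w + w^2 * FF q a b (Q^2 * t) w)" .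
  have "(\<lambda>k. t * (of_real a * u k + of_real a * w^2 * (TT q a b k w * (Q^2 * t) ^ k)
            - of_real b * (1 + w^2) * (TT q a b k w * (Q * t) ^ k)))
          sums (t * (of_real a * FF q a b t w + of_real a * w^2 * FF q a b (Q^2 * t) w
              - of_real b * (1 + w^2) * FF q a b (Q * t) w))"
    unfolding u_def by (intro sums_add sums_diff sums_mult s0 s1 s2)
  also have "(\<lambda>k. t * (of_real a * u k + of_real a * w^2 * (TT q a b k w * (Q^2 * t) ^ k)
            - of_real b * (1 + w^2) * (TT q a b k w * (Q * t) ^ k))) = (\<lambda>k. g (Suc k))"
  proof (rule ext)
    fix k
    have "g (Suc k) = TT q a b (Suc k) w * (1 - Q ^ (k+1)) * (1 - Q ^ (k+1) * w^2) * t ^ (Suc k)"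
      by (simp add: g_def u_def mult_ac)
    also have "\<dots> = xx q a b k w * TT q a b k w * t ^ (Suc k)"
      unfolding Q_def by (subst TT_rec[OF w]) simp
    finally show "t * (of_real a * u k + of_real a * w^2 * (TT q a b k w * (Q^2 * t) ^ k)
            - of_real b * (1 + w^2) * (TT q a b k w * (Q * t) ^ k)) = g (Suc k)"
      by (simp add: xx_def u_def Q_def[symmetric] sq sq1 sq2 sq3 sq4 algebra_simps)
  qed
  finally have "(\<lambda>k. g (Suc k)) sums (t * (of_real a * FF q a b t w + of_real a * w^2 * FF q a b (Q^2 * t) w
              - of_real b * (1 + w^2) * FF q a b (Q * t) w))" .
  hence "g sums (t * (of_real a * FF q a b t w + of_real a * w^2 * FF q a b (Q^2 * t) w
              - of_real b * (1 + w^2) * FF q a b (Q * t) w) + g 0)"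
    by (simp only: sums_Suc_iff)
  moreover have "g 0 = 0" by (simp add: g_def)
  ultimately show ?thesis using S1 sums_unique2 by force
qed

lemma psi_FF: "psi q a b n w = w powi n * FF q a b (of_real q ^ nat (n+1)) w"
  unfolding psi_def FF_def TT_def by (simp add: power_mult)

lemma psi_rec:
  assumes w: "norm w \<le> 1" "w \<noteq> 0"
  shows "psi q a b (int m + 1) w
         = (w + 1/w) * of_real ((1 - b * q^m) / (1 - a * q^m)) * psi q a b (int m) w - psi q a b (int m - 1) w"
proof -
  define Q where "Q = (of_real q :: complex)"
  have nQ: "norm Q \<le> 1" using q0 q1 by (simp add: Q_def)
  have t: "norm (Q ^ m) \<le> 1" using nQ by (simp add: norm_power power_le_one)
  define A where "A = FF q a b (Q^m) w"
  define B where "B = FF q a b (Q * Q^m) w"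
  define C where "C = FF q a b (Q^2 * Q^m) w"
  have "FF q a b (Q^m) w - (1 + w^2) * FF q a b (Q * Q^m) w + w^2 * FF q a b (Q^2 * Q^m) w
       = Q^m * (of_real a * FF q a b (Q^m) w + of_real a * w^2 * FF q a b (Q^2 * Q^m) w
              - of_real b * (1 + w^2) * FF q a b (Q * Q^m) w)"
    unfolding Q_def by (rule FF_rec[OF w(1) t[unfolded Q_def]])
  hence eq: "A - (1 + w^2) * B + w^2 * C = Q^m * (of_real a * A + of_real a * w^2 * C - of_real b * (1 + w^2) * B)"
    unfolding A_def B_def C_def .
  have qm: "\<bar>a * q^m\<bar> < 1"
  proof -
    have "\<bar>a * q^m\<bar> = \<bar>a\<bar> * q^m" using q0 by (simp add: abs_mult)
    also have "\<dots> \<le> \<bar>a\<bar> * 1" using q0 q1 by (intro mult_left_mono power_le_one) auto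
    finally show ?thesis using a1 by simp
  qed
  have nz: "1 - of_real a * Q^m \<noteq> 0"
  proof
    assume "1 - of_real a * Q^m = 0"
    hence "of_real (a * q^m) = (1::complex)" by (simp add: Q_def)
    hence "a * q^m = 1" using of_real_eq_1_iff by blast
    thus False using qm by simp
  qed
  have i1: "int m + 1 = int (m+1)" by simp
  have p1: "psi q a b (int m + 1) w = w^(m+1) * C"
  proof -
    have "nat (int (m+1) + 1) = m + 2" by simp
    moreover have "(of_real q :: complex) ^ (m+2) = Q^2 * Q^m" by (simp add: Q_def power_add power2_eq_square mult.commute)
    ultimately show ?thesis unfolding i1 psi_FF C_def power_int_of_nat by simp
  qed
  have p0: "psi q a b (int m) w = w^m * B"
  proof -
    have "nat (int m + 1) = Suc m" by simp
    moreover have "(of_real q :: complex) ^ Suc m = Q * Q^m" by (simp add: Q_def)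
    ultimately show ?thesis unfolding psi_FF B_def power_int_of_nat by simp
  qed
  have pm: "psi q a b (int m - 1) w = w^m / w * A"
    unfolding psi_FF A_def Q_def using power_int_diff[of w "int m" 1] w(2) by simp
  define W where "W = w^m"
  define \<tau> where "\<tau> = Q^m"
  have wt: "of_real ((1 - b*q^m)/(1 - a*q^m)) = (1 - of_real b * \<tau>)/(1 - of_real a * \<tau>)"
    by (simp add: \<tau>_def Q_def)
  have wm: "w^(m+1) = w * W" by (simp add: W_def)
  note eq' = eq[unfolded \<tau>_def[symmetric]] and nz' = nz[unfolded \<tau>_def[symmetric]]
  show ?thesis
    unfolding p1 p0 pm wt wm W_def[symmetric] using eq' nz' w(2)
    by (simp add: field_simps) algebra
qed

end


context
  fixes q a b :: real
  assumes q0: "0 < q" and q1: "q < 1" and a1: "\<bar>a\<bar> < 1"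
begin

lemma S_open: "open (ball (0::complex) 1 - {0})"
  by (intro open_Diff) auto

lemma psi_holo: "psi q a b n holomorphic_on (ball 0 1 - {0})"
proof -
  have fn: "psi q a b n = (\<lambda>w. w powi n * FF q a b (of_real q ^ nat (n+1)) w)"
    by (rule ext) (rule psi_FF[OF q0 q1 a1])
  have t: "norm ((of_real q :: complex) ^ nat (n+1)) \<le> 1"
    using q0 q1 by (simp add: norm_power power_le_one)
  show ?thesis unfolding fn
    by (intro holomorphic_intros holomorphic_on_subset[OF FF_holo[OF q0 q1 a1 t]]) auto
qed

lemma psi_deriv:
  assumes "w \<in> ball 0 1 - {0}"
  shows "(psi q a b n has_field_derivative deriv (psi q a b n) w) (at w)"
  by (rule holomorphic_derivI[OF psi_holo S_open assms])

lemma deriv_rec: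
  fixes m :: nat
  assumes z: "z \<in> ball 0 1 - {0}"
  defines "c \<equiv> (of_real ((1 - b * q^m) / (1 - a * q^m)) :: complex)"
  shows "deriv (psi q a b (int m + 1)) z
         = (1 - 1/z^2) * c * psi q a b (int m) z + (z + 1/z) * c * deriv (psi q a b (int m)) z
           - deriv (psi q a b (int m - 1)) z"
proof -
  have z0: "z \<noteq> 0" using z by auto
  have "((\<lambda>w. (w + 1/w) * c * psi q a b (int m) w - psi q a b (int m - 1) w) has_field_derivative
          ((1 - 1/z^2) * c * psi q a b (int m) z + (z + 1/z) * c * deriv (psi q a b (int m)) z
           - deriv (psi q a b (int m - 1)) z)) (at z)"
    using z0
    by (auto intro!: derivative_eq_intros psi_deriv[OF z] simp: field_simps power2_eq_square)
  hence "(psi q a b (int m + 1) has_field_derivative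
          ((1 - 1/z^2) * c * psi q a b (int m) z + (z + 1/z) * c * deriv (psi q a b (int m)) z
           - deriv (psi q a b (int m - 1)) z)) (at z)"
  proof (rule has_field_derivative_transform_within_open[OF _ S_open z])
    fix w assume "w \<in> ball (0::complex) 1 - {0}"
    hence "norm w \<le> 1" "w \<noteq> 0" by auto
    thus "(w + 1/w) * c * psi q a b (int m) w - psi q a b (int m - 1) w = psi q a b (int m + 1) w"
      unfolding c_def using psi_rec[OF q0 q1 a1] by simp
  qed
  thus ?thesis by (rule DERIV_imp_deriv)
qed

end


definition WW :: "real \<Rightarrow> real \<Rightarrow> real \<Rightarrow> complex \<Rightarrow> nat \<Rightarrow> complex" where
  "WW q a b z j = deriv (psi q a b (int j - 1)) z * psi q a b (int j) z
                  - psi q a b (int j - 1) z * deriv (psi q a b (int j)) z"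

context
  fixes q a b :: real and z :: complex
  assumes q0: "0 < q" and q1: "q < 1" and a1: "\<bar>a\<bar> < 1"
    and z0: "0 < norm z" and z1: "norm z < 1"
begin

lemma zS: "z \<in> ball 0 1 - {0}" using z0 z1 by auto

lemma W_step:
  "WW q a b z (Suc j) = WW q a b z j
     - (1 - 1/z^2) * of_real ((1 - b * q ^ j) / (1 - a * q ^ j)) * psi q a b (int j) z ^ 2"
proof -
  have e1: "psi q a b (int j + 1) z
         = (z + 1/z) * of_real ((1 - b * q^j) / (1 - a * q^j)) * psi q a b (int j) z - psi q a b (int j - 1) z"
    by (rule psi_rec[OF q0 q1 a1]) (use zS in auto)
  have e2: "deriv (psi q a b (int j + 1)) z
         = (1 - 1/z^2) * of_real ((1 - b * q^j) / (1 - a * q^j)) * psi q a b (int j) z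
           + (z + 1/z) * of_real ((1 - b * q^j) / (1 - a * q^j)) * deriv (psi q a b (int j)) z
           - deriv (psi q a b (int j - 1)) z"
    by (rule deriv_rec[OF q0 q1 a1 zS])
  have i: "int (Suc j) - 1 = int j" "int (Suc j) = int j + 1" by simp_all
  show ?thesis
    unfolding WW_def i e1 e2 by (simp add: algebra_simps power2_eq_square)
qed

lemma telescope:
  "(1 - 1/z^2) * (\<Sum>k<N. of_real ((1 - b * q ^ (k+n)) / (1 - a * q ^ (k+n))) * psi q a b (int (k+n)) z ^ 2)
   = WW q a b z n - WW q a b z (n + N)"
proof (induction N)
  case 0 show ?case by simp
next
  case (Suc N)
  define f where "f k = of_real ((1 - b * q ^ (k+n)) / (1 - a * q ^ (k+n))) * psi q a b (int (k+n)) z ^ 2" for k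
  have st: "WW q a b z (n + Suc N) = WW q a b z (n + N) - (1 - 1/z^2) * f N"
    using W_step[of "N+n"] by (simp add: f_def add.commute)
  have "(1 - 1/z^2) * (\<Sum>k<Suc N. f k) = (1 - 1/z^2) * (\<Sum>k<N. f k) + (1 - 1/z^2) * f N"
    by (simp add: distrib_left)
  also have "(1 - 1/z^2) * (\<Sum>k<N. f k) = WW q a b z n - WW q a b z (n + N)"
    using Suc.IH by (simp add: f_def)
  finally show ?case unfolding f_def[symmetric] st by simp
qed

definition rr where "rr = min (norm z) (1 - norm z) / 2"
definition \<rho> where "\<rho> = norm z + rr"
definition CC where "CC = suminf (ee q a b)"

lemma rr_pos: "rr > 0" using z0 z1 by (simp add: rr_def)
lemma rho_lt1: "\<rho> < 1"
proof -
  show ?thesis using z0 z1 unfolding \<rho>_def rr_def min_def by (auto split: if_splits simp: field_simps)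
qed
lemma rho_pos: "\<rho> > 0" using z0 rr_pos unfolding \<rho>_def by linarith
lemma CC_nonneg: "CC \<ge> 0"
  unfolding CC_def by (intro suminf_nonneg ee_summable[OF q0 q1 a1] ee_nonneg[OF q0 q1 a1])

lemma cball_prop:
  assumes "w \<in> cball z rr"
  shows "norm w \<le> \<rho>" "w \<noteq> 0"
proof -
  have d: "norm (w - z) \<le> rr" using assms by (simp add: dist_norm norm_minus_commute)
  show "norm w \<le> \<rho>" using d norm_triangle_ineq2[of w z] by (simp add: \<rho>_def)
  have "norm z - norm w \<le> rr" using d norm_triangle_ineq2[of z w] by (simp add: norm_minus_commute)
  moreover have "rr < norm z"
  proof -
    show ?thesis using z0 unfolding rr_def min_def by (auto split: if_splits)
  qed
  ultimately show "w \<noteq> 0" by auto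
qed

lemma cball_sub: "cball z rr \<subseteq> ball 0 1 - {0}"
  using cball_prop rho_lt1 by fastforce

lemma psi_bound:
  assumes "w \<in> cball z rr"
  shows "norm (psi q a b (int j) w) \<le> \<rho> ^ j * CC"
proof -
  have w: "norm w \<le> \<rho>" "norm w \<le> 1" using cball_prop[OF assms] rho_lt1 by auto
  have t: "norm ((of_real q :: complex) ^ nat (int j + 1)) \<le> 1"
    using q0 q1 by (simp add: norm_power power_le_one)
  have "norm (psi q a b (int j) w) = norm w ^ j * norm (FF q a b (of_real q ^ nat (int j + 1)) w)"
    by (simp add: psi_FF[OF q0 q1 a1] norm_mult norm_power)
  also have "\<dots> \<le> \<rho> ^ j * CC"
    unfolding CC_def
    by (intro mult_mono power_mono w FF_bound[OF q0 q1 a1 w(2) t]) (use rho_pos in auto)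
  finally show ?thesis .
qed

lemma dpsi_bound: "norm (deriv (psi q a b (int j)) z) \<le> \<rho> ^ j * CC / rr"
proof -
  have h: "psi q a b (int j) holomorphic_on cball z rr"
    by (rule holomorphic_on_subset[OF psi_holo[OF q0 q1 a1] cball_sub])
  have "norm ((deriv ^^ 1) (psi q a b (int j)) z) \<le> fact 1 * (\<rho> ^ j * CC) / rr ^ 1"
  proof (rule Cauchy_inequality)
    show "psi q a b (int j) holomorphic_on ball z rr"
      by (rule holomorphic_on_subset[OF h]) auto
    show "continuous_on (cball z rr) (psi q a b (int j))"
      by (rule holomorphic_on_imp_continuous_on[OF h])
    show "0 < rr" by (rule rr_pos)
    fix x assume "norm (z - x) = rr"
    hence "x \<in> cball z rr" by (simp add: dist_norm)
    thus "norm (psi q a b (int j) x) \<le> \<rho> ^ j * CC" by (rule psi_bound)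
  qed
  thus ?thesis by simp
qed

lemma W_bound: "norm (WW q a b z (Suc i)) \<le> (2 * CC * CC * \<rho> / rr) * (\<rho> * \<rho>) ^ i"
proof -
  have zc: "z \<in> cball z rr" using rr_pos by simp
  have i: "int (Suc i) - 1 = int i" by simp
  have A: "norm (deriv (psi q a b (int i)) z) * norm (psi q a b (int (Suc i)) z)
           \<le> (\<rho> ^ i * CC / rr) * (\<rho> ^ Suc i * CC)"
    by (intro mult_mono dpsi_bound psi_bound[OF zc]) (use rho_pos CC_nonneg rr_pos in auto)
  have B: "norm (psi q a b (int i) z) * norm (deriv (psi q a b (int (Suc i))) z)
           \<le> (\<rho> ^ i * CC) * (\<rho> ^ Suc i * CC / rr)"
    by (intro mult_mono dpsi_bound psi_bound[OF zc]) (use rho_pos CC_nonneg rr_pos in auto)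
  have "norm (WW q a b z (Suc i)) \<le> norm (deriv (psi q a b (int i)) z) * norm (psi q a b (int (Suc i)) z)
        + norm (psi q a b (int i) z) * norm (deriv (psi q a b (int (Suc i))) z)"
    unfolding WW_def i using norm_triangle_ineq4 by (metis norm_mult)
  also have "\<dots> \<le> (\<rho> ^ i * CC / rr) * (\<rho> ^ Suc i * CC) + (\<rho> ^ i * CC) * (\<rho> ^ Suc i * CC / rr)"
    by (rule add_mono[OF A B])
  also have "\<dots> = (2 * CC * CC * \<rho> / rr) * (\<rho> * \<rho>) ^ i"
    by (simp add: power_mult_distrib field_simps)
  finally show ?thesis .
qed

lemma W_lim: "(\<lambda>N. WW q a b z (N + n)) \<longlonglongrightarrow> 0"
proof -
  have "(\<lambda>i. (2 * CC * CC * \<rho> / rr) * (\<rho> * \<rho>) ^ i) \<longlonglongrightarrow> 0"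
  proof -
    have "\<rho> * \<rho> < 1 * 1" using rho_pos rho_lt1 by (intro mult_strict_mono) auto
    thus ?thesis using rho_pos
      by (intro tendsto_mult_right_zero LIMSEQ_realpow_zero) auto
  qed
  hence "(\<lambda>i. WW q a b z (Suc i)) \<longlonglongrightarrow> 0"
    by (rule Lim_null_comparison[rotated]) (use W_bound in auto)
  hence "WW q a b z \<longlonglongrightarrow> 0" by (rule LIMSEQ_imp_Suc)
  thus ?thesis by (rule LIMSEQ_ignore_initial_segment)
qed

lemma main:
  "(\<Sum>k. of_real ((1 - b * q ^ (k+n)) / (1 - a * q ^ (k+n))) * (psi q a b (int (k+n)) z)^2)
   = z^2 / (z^2 - 1) * WW q a b z n"
proof -
  have zn: "z \<noteq> 0" using z0 by auto
  have z2: "z^2 \<noteq> 1"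
  proof
    assume "z^2 = 1"
    hence "norm (z^2) = 1" by simp
    moreover have "norm (z^2) < 1" using z0 z1 by (simp add: norm_power power_less_one_iff)
    ultimately show False by simp
  qed
  define L where "L = (1 - 1/z^2 :: complex)"
  have Lz: "L * z^2 = z^2 - 1" unfolding L_def using zn by (simp add: field_simps)
  have L: "L \<noteq> 0"
  proof
    assume "L = 0"
    hence "z^2 - 1 = 0" using Lz by simp
    thus False using z2 by simp
  qed
  have ps: "(\<Sum>k<N. of_real ((1 - b * q ^ (k+n)) / (1 - a * q ^ (k+n))) * psi q a b (int (k+n)) z ^ 2)
           = (WW q a b z n - WW q a b z (N + n)) / L" for N
    using telescope[of n N] L by (simp add: L_def[symmetric] field_simps add.commute)
  have "(\<lambda>N. (WW q a b z n - WW q a b z (N + n)) / L) \<longlonglongrightarrow> (WW q a b z n - 0) / L"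
    by (intro tendsto_intros W_lim L)
  hence "(\<lambda>k. of_real ((1 - b * q ^ (k+n)) / (1 - a * q ^ (k+n))) * psi q a b (int (k+n)) z ^ 2)
          sums (WW q a b z n / L)"
    unfolding sums_def ps by simp
  hence "(\<Sum>k. of_real ((1 - b * q ^ (k+n)) / (1 - a * q ^ (k+n))) * (psi q a b (int (k+n)) z)^2) = WW q a b z n / L"
    by (rule sums_unique[symmetric])
  also have "\<dots> = z^2 / (z^2 - 1) * WW q a b z n"
    using zn z2 unfolding L_def by (simp add: field_simps)
  finally show ?thesis .
qed

end

theorem lemmaB1:
  fixes q \<alpha> \<beta> :: real and n :: nat and z :: complex
  assumes "0 < q" "q < 1" "-1 < \<alpha>" "\<alpha> < 1" "\<beta> < 1"
    and "0 < norm z" "norm z < 1"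
  shows "(\<Sum>k. of_real ((1 - \<beta> * q ^ (k+n)) / (1 - \<alpha> * q ^ (k+n)))
                 * (psi q \<alpha> \<beta> (int (k+n)) z)^2)
         = z^2 / (z^2 - 1) *
           (deriv (psi q \<alpha> \<beta> (int n - 1)) z * psi q \<alpha> \<beta> (int n) z
            - psi q \<alpha> \<beta> (int n - 1) z * deriv (psi q \<alpha> \<beta> (int n)) z)"
proof -
  have a1: "\<bar>\<alpha>\<bar> < 1" using assms(3,4) by auto
  show ?thesis
    using main[OF assms(1,2) a1 assms(6,7), of \<beta> n] unfolding WW_def .
qed

end
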